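(* Let $K=\mathbb{C}(x,y)$, let $k\in K^*$ and let $\ell$ be an element of an extension field with $\ell^n=k$ and $[K(\ell):K]=n$; put $L=K(\ell)$. Write $k=q_1^{e_1}\cdots q_r^{e_r}$ with pairwise relatively prime irreducible polynomials $q_i\in\mathbb{C}[x,y]$ and nonzero integers $e_i$ (up to a nonzero constant factor). If no $q_i$ lies in $\mathbb{C}[x]$, then $\mathbb{C}(x)$ is algebraically closed in $L$, i.e. every element of $L$ that is algebraic over $\mathbb{C}(x)$ lies in $\mathbb{C}(x)$. *)

theory Defs
  imports Complex_Main "HOL-Computational_Algebra.Polynomial" "HOL-Computational_Algebra.Fraction_Field"
begin

text \<open>C[x,y] is modelled as complex poly poly: the inner variable is x, the outer one is y.
  So C[x] inside C[x,y] consists of the constant (outer) polynomials [:a:].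
  K = C(x,y) is the fraction field.\<close>

type_synonym Cxy = "complex poly poly"
type_synonym K = "complex poly poly fract"

definition to_K :: "Cxy \<Rightarrow> K" where
  "to_K p = Fract p 1"

definition Cx_poly :: "Cxy set" where
  "Cx_poly = {[:a:] | a. True}"

definition Cx_field :: "K set" where
  "Cx_field = {to_K [:a:] / to_K [:b:] | a b. b \<noteq> 0}"

definition is_field_hom :: "('a::field \<Rightarrow> 'b::field) \<Rightarrow> bool" where
  "is_field_hom \<phi> \<longleftrightarrow> (\<forall>a b. \<phi> (a + b) = \<phi> a + \<phi> b) \<and> (\<forall>a b. \<phi> (a * b) = \<phi> a * \<phi> b) \<and> \<phi> 1 = 1"

inductive_set gen_field :: "('a::field \<Rightarrow> 'b::field) \<Rightarrow> 'b \<Rightarrow> 'b set" for \<phi> l where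
  base: "\<phi> c \<in> gen_field \<phi> l"
| gen: "l \<in> gen_field \<phi> l"
| add: "x \<in> gen_field \<phi> l \<Longrightarrow> y \<in> gen_field \<phi> l \<Longrightarrow> x + y \<in> gen_field \<phi> l"
| neg: "x \<in> gen_field \<phi> l \<Longrightarrow> - x \<in> gen_field \<phi> l"
| mult: "x \<in> gen_field \<phi> l \<Longrightarrow> y \<in> gen_field \<phi> l \<Longrightarrow> x * y \<in> gen_field \<phi> l"
| inv: "x \<in> gen_field \<phi> l \<Longrightarrow> inverse x \<in> gen_field \<phi> l"

definition ext_degree_eq :: "('a::field \<Rightarrow> 'b::field) \<Rightarrow> 'b \<Rightarrow> nat \<Rightarrow> bool" where
  "ext_degree_eq \<phi> l n \<longleftrightarrow>
     (\<exists>p. p \<noteq> 0 \<and> degree p = n \<and> poly (map_poly \<phi> p) l = 0) \<and>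
     (\<forall>p. p \<noteq> 0 \<and> poly (map_poly \<phi> p) l = 0 \<longrightarrow> n \<le> degree p)"

definition algebraic_over :: "('a::field \<Rightarrow> 'b::field) \<Rightarrow> 'a set \<Rightarrow> 'b \<Rightarrow> bool" where
  "algebraic_over \<phi> F z \<longleftrightarrow> (\<exists>p. p \<noteq> 0 \<and> (\<forall>i. coeff p i \<in> F) \<and> poly (map_poly \<phi> p) z = 0)"

end

theory Submission
  imports Defs "HOL-Computational_Algebra.Polynomial_Factorial" "HOL-Computational_Algebra.Field_as_Ring"
begin


instance fract :: ("{idom, ring_char_0}") ring_char_0
proof
  show "inj (of_nat :: nat \<Rightarrow> 'a fract)"
    by (rule injI) (simp add: of_nat_fract eq_fract)
qed

instantiation fract :: (idom)
  "{unique_euclidean_ring, normalization_euclidean_semiring, normalization_semidom_multiplicative}"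
begin
definition [simp]: "normalize_fract = (normalize_field :: 'a fract \<Rightarrow> _)"
definition [simp]: "unit_factor_fract = (unit_factor_field :: 'a fract \<Rightarrow> _)"
definition [simp]: "modulo_fract = (mod_field :: 'a fract \<Rightarrow> _)"
definition [simp]: "euclidean_size_fract = (euclidean_size_field :: 'a fract \<Rightarrow> _)"
definition [simp]: "division_segment (x :: 'a fract) = 1"
instance
  by standard (simp_all add: dvd_field_iff field_split_simps split: if_splits)
end

instantiation fract :: (idom) euclidean_ring_gcd
begin
definition gcd_fract :: "'a fract \<Rightarrow> 'a fract \<Rightarrow> 'a fract" where
  "gcd_fract = Euclidean_Algorithm.gcd"
definition lcm_fract :: "'a fract \<Rightarrow> 'a fract \<Rightarrow> 'a fract" where
  "lcm_fract = Euclidean_Algorithm.lcm"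
definition Gcd_fract :: "'a fract set \<Rightarrow> 'a fract" where
 "Gcd_fract = Euclidean_Algorithm.Gcd"
definition Lcm_fract :: "'a fract set \<Rightarrow> 'a fract" where
 "Lcm_fract = Euclidean_Algorithm.Lcm"
instance by standard (simp_all add: gcd_fract_def lcm_fract_def Gcd_fract_def Lcm_fract_def)
end

instance fract :: (idom) field_gcd ..

definition Dp :: "Cxy \<Rightarrow> Cxy \<Rightarrow> K" where
  "Dp A B = Fract (pderiv A * B - A * pderiv B) (B*B)"

definition Dk :: "K \<Rightarrow> K" where
  "Dk a = (case (SOME p. snd p \<noteq> 0 \<and> a = Fract (fst p) (snd p)) of (A,B) \<Rightarrow> Dp A B)"

lemma Dp_welldef:
  assumes "B \<noteq> 0" "B2 \<noteq> 0" "Fract A B = Fract A2 B2"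
  shows "Dp A B = Dp A2 B2"
proof -
  have h1: "A * B2 = A2 * B" using assms by (simp add: eq_fract)
  have h2: "pderiv A * B2 + A * pderiv B2 = pderiv A2 * B + A2 * pderiv B"
    using arg_cong[OF h1, of pderiv] by (simp add: pderiv_mult algebra_simps)
  have "(pderiv A * B - A * pderiv B) * (B2 * B2) = (pderiv A2 * B2 - A2 * pderiv B2) * (B * B)"
    using h1 h2 by algebra
  then show ?thesis using assms by (simp add: Dp_def eq_fract)
qed

lemma Dk_Fract: assumes "B \<noteq> 0" shows "Dk (Fract A B) = Dp A B"
proof -
  let ?P = "\<lambda>p. snd p \<noteq> 0 \<and> Fract A B = Fract (fst p) (snd p)"
  have ex: "\<exists>p. ?P p" using assms by (intro exI[of _ "(A,B)"]) auto
  obtain A2 B2 where e: "(SOME p. ?P p) = (A2,B2)" by (cases "SOME p. ?P p")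
  have "?P (A2,B2)" using someI_ex[OF ex] e by simp
  then show ?thesis unfolding Dk_def e using Dp_welldef[of B B2 A A2] assms by auto
qed

lemma Dk_add: "Dk (a + b) = Dk a + Dk b"
proof -
  obtain A B where a: "a = Fract A B" "B \<noteq> 0" by (cases a) auto
  obtain C E where b: "b = Fract C E" "E \<noteq> 0" by (cases b) auto
  show ?thesis using a b by (simp add: Dk_Fract Dp_def eq_fract pderiv_mult pderiv_add algebra_simps)
qed

lemma Dk_mult: "Dk (a * b) = Dk a * b + a * Dk b"
proof -
  obtain A B where a: "a = Fract A B" "B \<noteq> 0" by (cases a) auto
  obtain C E where b: "b = Fract C E" "E \<noteq> 0" by (cases b) auto
  show ?thesis using a b by (simp add: Dk_Fract Dp_def eq_fract pderiv_mult pderiv_add algebra_simps)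
qed

lemma Fract_to_K: "y \<noteq> 0 \<Longrightarrow> Fract x y = to_K x / to_K y"
  by (simp add: to_K_def)

lemma Dk_Cx: assumes "u \<in> Cx_field" shows "Dk u = 0"
proof -
  obtain a b where u: "u = to_K [:a:] / to_K [:b:]" "b \<noteq> 0" using assms by (auto simp: Cx_field_def)
  then have "u = Fract [:a:] [:b:]" by (simp add: Fract_to_K)
  then show ?thesis using u by (simp add: Dk_Fract Dp_def fract_collapse)
qed

lemma Dk_kernel: assumes "Dk u = 0" shows "u \<in> Cx_field"
proof -
  obtain A B where u: "u = Fract A B" "B \<noteq> 0" by (cases u) auto
  then have "gcd A B \<noteq> 0" by simp
  from gcd_coprime_exists[OF this] obtain A' B' where
    ab: "A = A' * gcd A B" "B = B' * gcd A B" "coprime A' B'" by blast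
  have B'0: "B' \<noteq> 0" using ab u by auto
  have "A * B' = A' * B" by (subst ab(1), subst ab(2)) (simp add: algebra_simps)
  then have u': "u = Fract A' B'" using u B'0 by (simp add: eq_fract)
  have "Dp A' B' = 0" using assms u' B'0 by (simp add: Dk_Fract)
  then have e: "A' * pderiv B' = pderiv A' * B'" using B'0 by (simp add: Dp_def Zero_fract_def eq_fract)
  have "A' dvd pderiv A' * B'" by (metis dvd_triv_left e)
  then have "A' dvd pderiv A'" using ab(3) by (simp add: coprime_dvd_mult_left_iff)
  have pA: "pderiv A' = 0"
  proof (rule ccontr)
    assume "pderiv A' \<noteq> 0"
    then have "degree A' \<le> degree (pderiv A')" using \<open>A' dvd pderiv A'\<close> by (simp add: dvd_imp_degree_le)
    then have "degree A' = 0" by (simp add: degree_pderiv)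
    then show False using \<open>pderiv A' \<noteq> 0\<close> by (simp add: pderiv_eq_0_iff)
  qed
  show ?thesis
  proof (cases "A' = 0")
    case True
    then have "u = to_K [:0:] / to_K [:1:]" using u' by (simp add: fract_collapse to_K_def)
    then show ?thesis unfolding Cx_field_def by (intro CollectI exI[of _ 0] exI[of _ 1]) simp
  next
    case False
    then have "pderiv B' = 0" using e pA by simp
    then have "degree B' = 0" "degree A' = 0" using pA by (simp_all add: pderiv_eq_0_iff)
    then have "B' = [:coeff B' 0:]" "A' = [:coeff A' 0:]" by (auto elim!: degree_eq_zeroE)
    then have "u = to_K [:coeff A' 0:] / to_K [:coeff B' 0:]" "coeff B' 0 \<noteq> 0"
      using u' B'0 Fract_to_K by (metis, metis pCons_0_0)
    then show ?thesis unfolding Cx_field_def by blast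
  qed
qed


lemma Dk_1: "Dk 1 = 0"
  using Dk_Fract[of 1 1] by (simp add: Dp_def fract_collapse)

lemma Dk_0: "Dk 0 = 0"
  using Dk_add[of 0 0] by simp

lemma Dk_uminus: "Dk (- a) = - Dk a"
  using Dk_add[of a "-a"] by (simp add: Dk_0 add_eq_0_iff)

lemma Dk_diff: "Dk (a - b) = Dk a - Dk b"
  using Dk_add[of a "-b"] by (simp add: Dk_uminus)

lemma Dk_of_nat: "Dk (of_nat m) = 0"
  by (induct m) (simp_all add: Dk_0 Dk_add Dk_1)

lemma Dk_sum: "Dk (sum f A) = (\<Sum>x\<in>A. Dk (f x))"
  by (induct A rule: infinite_finite_induct) (simp_all add: Dk_0 Dk_add)

lemma Dk_power: "Dk (a ^ m) = of_nat m * a ^ (m - 1) * Dk a"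
proof (induct m)
  case 0 then show ?case by (simp add: Dk_1)
next
  case (Suc m) then show ?case
    by (cases m) (simp_all add: Dk_mult algebra_simps)
qed

locale S =
  fixes \<phi> :: "K \<Rightarrow> 'L::field" and l :: 'L and n :: nat and k :: K
  assumes hom: "is_field_hom \<phi>" and k_nz: "k \<noteq> 0" and l_root: "l ^ n = \<phi> k"
    and deg: "ext_degree_eq \<phi> l n"
begin

lemma phi_add: "\<phi> (a + b) = \<phi> a + \<phi> b" and phi_mult: "\<phi> (a * b) = \<phi> a * \<phi> b"
  and phi_1: "\<phi> 1 = 1"
  using hom by (auto simp: is_field_hom_def)

lemma phi_0: "\<phi> 0 = 0"
  using phi_add[of 0 0] by (metis add.right_neutral add_left_cancel)

lemma phi_uminus: "\<phi> (- a) = - \<phi> a"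
  using phi_add[of a "-a"] by (simp add: phi_0 add_eq_0_iff)

lemma phi_diff: "\<phi> (a - b) = \<phi> a - \<phi> b"
  using phi_add[of a "-b"] by (simp add: phi_uminus)

lemma phi_power: "\<phi> (a ^ m) = \<phi> a ^ m"
  by (induct m) (simp_all add: phi_1 phi_mult)

lemma phi_eq0: "\<phi> a = 0 \<longleftrightarrow> a = 0"
proof
  assume h: "\<phi> a = 0"
  show "a = 0"
  proof (rule ccontr)
    assume "a \<noteq> 0"
    then have "\<phi> (a * inverse a) = 1" by (simp add: phi_1)
    then show False using h by (simp add: phi_mult)
  qed
qed (simp add: phi_0)

definition ev :: "K poly \<Rightarrow> 'L" where "ev P = poly (map_poly \<phi> P) l"

lemma ev_pCons: "ev (pCons a P) = \<phi> a + l * ev P"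
  by (simp add: ev_def map_poly_pCons phi_0)

lemma ev_0: "ev 0 = 0" by (simp add: ev_def)

lemma ev_const: "ev [:a:] = \<phi> a"
  by (simp add: ev_pCons ev_0)

lemma ev_add: "ev (P + Q) = ev P + ev Q"
proof (induct P arbitrary: Q)
  case 0 then show ?case by (simp add: ev_0)
next
  case (pCons a P)
  show ?case
  proof (cases Q)
    case (pCons b Q')
    then show ?thesis using pCons.hyps(2)[of Q'] by (simp add: ev_pCons phi_add algebra_simps)
  qed
qed

lemma ev_smult: "ev (smult a P) = \<phi> a * ev P"
  by (induct P) (simp_all add: ev_pCons ev_0 phi_mult phi_0 algebra_simps)

lemma ev_mult: "ev (P * Q) = ev P * ev Q"
  by (induct P) (simp_all add: ev_pCons ev_0 ev_add ev_smult phi_0 algebra_simps)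

lemma ev_uminus: "ev (- P) = - ev P"
  using ev_add[of P "-P"] by (simp add: ev_0 add_eq_0_iff)

lemma ev_diff: "ev (P - Q) = ev P - ev Q"
  using ev_add[of P "-Q"] by (simp add: ev_uminus)

lemma ev_monom: "ev (monom a m) = \<phi> a * l ^ m"
  by (simp add: ev_def map_poly_monom phi_0 poly_monom)

lemma ev_sum: "ev (sum f A) = (\<Sum>x\<in>A. ev (f x))"
  by (induct A rule: infinite_finite_induct) (simp_all add: ev_0 ev_add)

lemma ev_pcompose: "ev (pcompose g P) = poly (map_poly \<phi> g) (ev P)"
  by (induct g) (simp_all add: pcompose_pCons ev_add ev_mult ev_const map_poly_pCons phi_0 ev_0)

lemma minimal: "P \<noteq> 0 \<Longrightarrow> ev P = 0 \<Longrightarrow> n \<le> degree P"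
  using deg by (auto simp: ext_degree_eq_def ev_def)

lemma n_pos: "n > 0"
proof -
  obtain p where "p \<noteq> 0" "degree p = n" "ev p = 0" using deg by (auto simp: ext_degree_eq_def ev_def)
  show ?thesis
  proof (rule ccontr)
    assume "\<not> 0 < n"
    then have "degree p = 0" using \<open>degree p = n\<close> by simp
    then obtain a where "p = [:a:]" by (metis degree_eq_zeroE)
    then show False using \<open>p \<noteq> 0\<close> \<open>ev p = 0\<close> by (simp add: ev_const phi_eq0)
  qed
qed

definition M :: "K poly" where "M = monom 1 n - [:k:]"

lemma coeff_M: "coeff M i = (if i = n then 1 else 0) - (if i = 0 then k else 0)"
  by (cases i) (simp_all add: M_def coeff_monom)

lemma degree_M: "degree M = n"
proof -
  have "degree M \<le> n" by (rule degree_le) (use n_pos in \<open>auto simp: coeff_M\<close>)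
  moreover have "coeff M n \<noteq> 0" using n_pos by (simp add: coeff_M)
  ultimately show ?thesis using le_degree le_antisym by blast
qed

lemma M_nz: "M \<noteq> 0"
  using degree_M n_pos by auto

lemma ev_M: "ev M = 0"
  by (simp add: M_def ev_diff ev_monom ev_const phi_1 l_root)

lemma ev_mod: "ev (Q mod M) = ev Q"
proof -
  have "ev (Q mod M) = ev (Q div M) * ev M + ev (Q mod M)" by (simp only: ev_M mult_zero_right add_0_left)
  also have "\<dots> = ev Q" by (simp only: ev_add[symmetric] ev_mult[symmetric] div_mult_mod_eq)
  finally show ?thesis .
qed

lemma ev_zero_dvd: assumes "ev Q = 0" shows "M dvd Q"
proof -
  have e: "ev (Q mod M) = 0" using assms by (simp only: ev_mod)
  have "Q mod M = 0"
  proof (rule ccontr)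
    assume "Q mod M \<noteq> 0"
    then have "degree (Q mod M) < degree M" by (rule degree_mod_less'[OF M_nz])
    then have "degree (Q mod M) < n" by (simp only: degree_M)
    then show False using minimal[OF \<open>Q mod M \<noteq> 0\<close> e] by linarith
  qed
  then show ?thesis by (rule mod_0_imp_dvd)
qed

lemma dvd_ev: "M dvd Q \<Longrightarrow> ev Q = 0"
  by (auto simp: ev_mult ev_M)

lemma reduce: "\<exists>P'. degree P' < n \<and> ev P' = ev P"
proof -
  have "degree (P mod M) < n"
  proof (cases "P mod M = 0")
    case True then show ?thesis using n_pos by (simp only: True degree_0)
  next
    case False
    then have "degree (P mod M) < degree M" by (rule degree_mod_less'[OF M_nz])
    then show ?thesis by (simp only: degree_M)
  qed
  then show ?thesis using ev_mod[of P] by blast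
qed

lemma inverse_ev: "\<exists>Q. ev Q = inverse (ev P)"
proof (cases "ev P = 0")
  case True then show ?thesis by (intro exI[of _ 0]) (simp add: ev_0)
next
  case False
  obtain P' where P': "degree P' < n" "ev P' = ev P" using reduce by blast
  then have P'0: "P' \<noteq> 0" using False ev_0 by auto
  define G where "G = gcd P' M"
  have "G dvd M" "G dvd P'" by (simp_all add: G_def)
  then obtain H where H: "M = G * H" by blast
  have G0: "G \<noteq> 0" using P'0 by (simp add: G_def)
  have H0: "H \<noteq> 0" using H M_nz by auto
  have dGP: "degree G \<le> degree P'" using \<open>G dvd P'\<close> P'0 by (simp add: dvd_imp_degree_le)
  have "ev G \<noteq> 0"
  proof
    assume "ev G = 0"
    then have "n \<le> degree G" using minimal G0 by blast
    then show False using dGP P' by simp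
  qed
  moreover have "ev G * ev H = 0" using H ev_M by (simp add: ev_mult[symmetric])
  ultimately have "ev H = 0" by simp
  then have "n \<le> degree H" using minimal H0 by blast
  moreover have "degree M = degree G + degree H" using H G0 H0 by (simp add: degree_mult_eq)
  ultimately have "degree G = 0" using degree_M by simp
  then obtain g where g: "G = [:g:]" by (metis degree_eq_zeroE)
  obtain U V where "U * P' + V * M = G"
    using bezout_coefficients_fst_snd[of P' M] unfolding G_def by blast
  then have "ev (U * P' + V * M) = ev [:g:]" using g by simp
  then have "ev U * ev P + ev V * ev M = \<phi> g" using P' by (simp only: ev_add ev_mult ev_const)
  then have e: "ev U * ev P = \<phi> g" using ev_M by simp
  have "g \<noteq> 0" using G0 g by simp
  have "ev (smult (inverse g) U) * ev P = \<phi> (inverse g) * (ev U * ev P)"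
    by (simp only: ev_smult mult.assoc)
  also have "\<dots> = \<phi> (inverse g * g)" using e by (simp add: phi_mult)
  also have "\<dots> = 1" using \<open>g \<noteq> 0\<close> by (simp add: phi_1)
  finally have "ev (smult (inverse g) U) * ev P = 1" .
  then have "ev P * ev (smult (inverse g) U) = 1" by (simp add: mult.commute)
  then have "inverse (ev P) = ev (smult (inverse g) U)" by (rule inverse_unique)
  then show ?thesis by (intro exI[of _ "smult (inverse g) U"]) simp
qed

lemma gen_rep: "z \<in> gen_field \<phi> l \<Longrightarrow> \<exists>P. degree P < n \<and> z = ev P"
proof -
  assume "z \<in> gen_field \<phi> l"
  then have "\<exists>P. z = ev P"
  proof induct
    case (base c) show ?case by (intro exI[of _ "[:c:]"]) (simp add: ev_const)
  next
    case gen
    have "ev [:0, 1:] = l" by (simp add: ev_pCons ev_const phi_0 phi_1 ev_0)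
    then show ?case by (intro exI[of _ "[:0,1:]"]) simp
  next
    case (add x y) then obtain P Q where "x = ev P" "y = ev Q" by blast
    then show ?case by (intro exI[of _ "P + Q"]) (simp add: ev_add)
  next
    case (neg x) then obtain P where "x = ev P" by blast
    then show ?case by (intro exI[of _ "- P"]) (simp add: ev_uminus)
  next
    case (mult x y) then obtain P Q where "x = ev P" "y = ev Q" by blast
    then show ?case by (intro exI[of _ "P * Q"]) (simp add: ev_mult)
  next
    case (inv x) then obtain P where "x = ev P" by blast
    moreover obtain Q where "ev Q = inverse (ev P)" using inverse_ev by blast
    ultimately show ?case by (intro exI[of _ Q]) simp
  qed
  then obtain P where "z = ev P" by blast
  then show ?thesis using reduce[of P] by auto
qed

end




context S begin

definition hK :: K where "hK = Dk k / (of_nat n * k)"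

definition mD :: "K poly \<Rightarrow> K poly" where "mD P = map_poly Dk P"

definition Del :: "K poly \<Rightarrow> K poly" where
  "Del P = mD P + smult hK (pCons 0 (pderiv P))"

lemma coeff_mD: "coeff (mD P) i = Dk (coeff P i)"
  by (simp add: mD_def coeff_map_poly Dk_0)

lemma coeff_Del: "coeff (Del P) i = Dk (coeff P i) + hK * (of_nat i * coeff P i)"
  by (cases i) (simp_all add: Del_def coeff_mD Dk_0 coeff_pderiv)

lemma mD_add: "mD (P + Q) = mD P + mD Q"
  by (rule poly_eqI) (simp add: coeff_mD Dk_add)

lemma mD_mult: "mD (P * Q) = mD P * Q + P * mD Q"
  by (rule poly_eqI) (simp add: coeff_mD coeff_mult Dk_sum Dk_mult sum.distrib)

lemma Del_add: "Del (P + Q) = Del P + Del Q"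
  by (rule poly_eqI) (simp add: coeff_Del Dk_add algebra_simps)

lemma pCons0: "pCons 0 X = [:0,1:] * (X :: K poly)"
  by (simp add: smult_1_left)

lemma Del_mult: "Del (P * Q) = Del P * Q + P * Del Q"
  unfolding Del_def mD_mult pderiv_mult
  by (simp add: algebra_simps smult_add_right)

lemma Del_0: "Del 0 = 0"
  by (simp add: Del_def mD_def)

lemma Del_const: "Dk a = 0 \<Longrightarrow> Del [:a:] = 0"
  by (rule poly_eqI) (simp add: coeff_Del coeff_pCons Dk_0 split: nat.split)

lemma n_K: "(of_nat n :: K) \<noteq> 0"
  using n_pos by simp

lemma Del_M: "Del M = smult (Dk k / k) M"
proof (rule poly_eqI)
  fix i
  show "coeff (Del M) i = coeff (smult (Dk k / k) M) i"
  proof (cases "i = n")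
    case True
    then have "i \<noteq> 0" using n_pos by simp
    then show ?thesis using True n_K k_nz
      by (simp add: coeff_Del coeff_M Dk_1 hK_def field_simps)
  next
    case False
    then show ?thesis using k_nz
      by (cases "i = 0") (simp_all add: coeff_Del coeff_M Dk_uminus Dk_0 hK_def field_simps)
  qed
qed

lemma Del_dvd: assumes "M dvd Q" shows "M dvd Del Q"
proof -
  obtain R where "Q = M * R" using assms by blast
  then have "Del Q = M * (smult (Dk k / k) R + Del R)"
    by (simp add: Del_mult Del_M algebra_simps)
  then show ?thesis by simp
qed

lemma Del_pcompose:
  "(\<forall>i. Dk (coeff g i) = 0) \<Longrightarrow> Del (pcompose g P) = pcompose (pderiv g) P * Del P"
proof (induct g)
  case 0 then show ?case by (simp add: Del_0)
next
  case (pCons a g)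
  have a: "Dk a = 0" using pCons.prems by (metis coeff_pCons_0)
  have g: "\<forall>i. Dk (coeff g i) = 0" using pCons.prems by (metis coeff_pCons_Suc)
  have "Del (pcompose (pCons a g) P) = Del P * pcompose g P + P * (pcompose (pderiv g) P * Del P)"
    by (simp add: pcompose_pCons Del_add Del_mult Del_const[OF a] pCons.hyps(2)[OF g])
  also have "\<dots> = pcompose (pderiv (pCons a g)) P * Del P"
    by (simp add: pderiv_pCons pcompose_add pcompose_pCons algebra_simps)
  finally show ?case .
qed

end



context S begin

lemma degree_Del: "degree (Del P) \<le> degree P"
  by (rule degree_le) (simp add: coeff_Del coeff_eq_0 Dk_0)

lemma key:
  assumes P: "degree P < n" and alg: "algebraic_over \<phi> Cx_field (ev P)"
  shows "Del P = 0"
proof -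
  define Sg where "Sg = {g. g \<noteq> 0 \<and> (\<forall>i. Dk (coeff g i) = 0) \<and> poly (map_poly \<phi> g) (ev P) = 0}"
  obtain p where p: "p \<noteq> 0" "\<forall>i. coeff p i \<in> Cx_field" "poly (map_poly \<phi> p) (ev P) = 0"
    using alg by (auto simp: algebraic_over_def)
  then have "p \<in> Sg" by (simp add: Sg_def Dk_Cx)
  then obtain g where g: "g \<in> Sg" and gmin: "\<forall>h. h \<in> Sg \<longrightarrow> degree g \<le> degree h"
    using ex_has_least_nat[of "\<lambda>g. g \<in> Sg" p degree] by blast
  have g0: "g \<noteq> 0" and gD: "\<forall>i. Dk (coeff g i) = 0" and gz: "poly (map_poly \<phi> g) (ev P) = 0"
    using g by (auto simp: Sg_def)
  have dg: "degree g \<noteq> 0"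
  proof
    assume "degree g = 0"
    then obtain a where a: "g = [:a:]" by (metis degree_eq_zeroE)
    then have "a \<noteq> 0" using g0 by simp
    moreover have "poly (map_poly \<phi> [:a:]) (ev P) = \<phi> a" by (simp add: map_poly_pCons phi_0)
    ultimately show False using gz a by (simp add: phi_eq0)
  qed
  have pg: "pderiv g \<noteq> 0" using dg by (simp add: pderiv_eq_0_iff)
  have pgD: "\<forall>i. Dk (coeff (pderiv g) i) = 0"
    using gD by (simp add: coeff_pderiv Dk_mult Dk_of_nat del: of_nat_Suc)
  have "degree (pderiv g) < degree g" using dg by (simp add: degree_pderiv)
  then have pgz: "poly (map_poly \<phi> (pderiv g)) (ev P) \<noteq> 0"
  proof -
    assume lt: "degree (pderiv g) < degree g"
    show ?thesis
    proof
      assume "poly (map_poly \<phi> (pderiv g)) (ev P) = 0"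
      then have "pderiv g \<in> Sg" using pg pgD by (simp add: Sg_def)
      then have "degree g \<le> degree (pderiv g)" using gmin by blast
      then show False using lt by linarith
    qed
  qed
  have "ev (pcompose g P) = 0" using gz by (simp add: ev_pcompose)
  then have "M dvd pcompose g P" by (rule ev_zero_dvd)
  then have "M dvd Del (pcompose g P)" by (rule Del_dvd)
  then have "ev (Del (pcompose g P)) = 0" by (rule dvd_ev)
  then have "ev (pcompose (pderiv g) P) * ev (Del P) = 0"
    by (simp add: Del_pcompose[OF gD] ev_mult)
  then have e: "ev (Del P) = 0" using pgz by (simp add: ev_pcompose)
  show "Del P = 0"
  proof (rule ccontr)
    assume "Del P \<noteq> 0"
    then have "n \<le> degree (Del P)" using minimal e by blast
    then show False using degree_Del[of P] P by linarith
  qed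
qed

lemma coeff_rel:
  assumes "Del P = 0"
  shows "Dk (coeff P i) = - (hK * (of_nat i * coeff P i))"
  using arg_cong[OF assms, of "\<lambda>X. coeff X i"] by (simp add: coeff_Del eq_neg_iff_add_eq_0)

lemma Dk_pow_rel:
  assumes rel: "Dk a = - (hK * (of_nat i * a))" and i: "0 < i"
  shows "Dk (a ^ n * k ^ i) = 0"
proof -
  define A where "A = a ^ (n - 1)"
  define Kp where "Kp = k ^ (i - 1)"
  have an: "a ^ n = A * a" unfolding A_def by (rule power_minus_mult[OF n_pos, symmetric])
  have ki: "k ^ i = Kp * k" unfolding Kp_def by (rule power_minus_mult[OF i, symmetric])
  have da: "Dk a = - (Dk k * of_nat i * a) / (of_nat n * k)" using rel by (simp add: hK_def)
  have "Dk (a ^ n * k ^ i) = of_nat n * a ^ (n - 1) * Dk a * k ^ i + a ^ n * (of_nat i * k ^ (i - 1) * Dk k)"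
    by (simp add: Dk_mult Dk_power)
  also have "\<dots> = of_nat n * A * Dk a * (Kp * k) + (A * a) * (of_nat i * Kp * Dk k)"
    by (simp only: A_def[symmetric] Kp_def[symmetric] an ki)
  also have "\<dots> = 0" unfolding da using k_nz n_K by (simp add: field_simps)
  finally show ?thesis .
qed

lemma no_power:
  assumes p: "1 < p" "p dvd n" and kg: "k = g ^ p"
  shows False
proof -
  obtain m where m: "n = m * p" using p by (auto elim!: dvdE simp: mult.commute)
  have m0: "0 < m" using m n_pos by (cases m) auto
  have mn: "m < n" using m p m0 by simp
  have "(l ^ m) ^ p = \<phi> g ^ p" using l_root kg m by (simp add: power_mult phi_power)
  then have "(l ^ m) ^ p - \<phi> g ^ p = 0" by simp
  then have "(l ^ m - \<phi> g) * (\<Sum>i<p. \<phi> g ^ (p - Suc i) * (l ^ m) ^ i) = 0"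
    by (simp add: power_diff_sumr2)
  then consider "l ^ m - \<phi> g = 0" | "(\<Sum>i<p. \<phi> g ^ (p - Suc i) * (l ^ m) ^ i) = 0" by auto
  then show False
  proof cases
    case 1
    define P1 where "P1 = monom 1 m - [:g:]"
    have e1: "ev P1 = 0" using 1 by (simp add: P1_def ev_diff ev_monom ev_const phi_1)
    have "coeff P1 m = 1" using m0 by (cases m) (simp_all add: P1_def coeff_monom)
    then have nz1: "P1 \<noteq> 0" by auto
    have "degree P1 \<le> m"
      unfolding P1_def by (rule degree_le) (auto simp: coeff_monom coeff_pCons split: nat.split)
    then show False using minimal[OF nz1 e1] mn by linarith
  next
    case 2
    define P2 where "P2 = (\<Sum>i<p. monom (g ^ (p - Suc i)) (m * i))"
    have e2: "ev P2 = 0" using 2 by (simp add: P2_def ev_sum ev_monom phi_power power_mult)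
    have "coeff P2 (m * (p - 1)) = 1"
    proof -
      have "coeff P2 (m * (p - 1)) = (\<Sum>i<p. if m * i = m * (p - 1) then g ^ (p - Suc i) else 0)"
        by (simp add: P2_def coeff_sum coeff_monom)
      also have "\<dots> = (\<Sum>i\<in>{p - 1}. g ^ (p - Suc i))"
        using m0 p by (intro sum.mono_neutral_cong_right) auto
      also have "\<dots> = 1" using p by simp
      finally show ?thesis .
    qed
    then have nz2: "P2 \<noteq> 0" by auto
    have "degree P2 \<le> m * (p - 1)"
      unfolding P2_def
    proof (rule degree_sum_le)
      fix i assume "i \<in> {..<p}"
      then have "m * i \<le> m * (p - 1)" by (intro mult_le_mono2) auto
      then show "degree (monom (g ^ (p - Suc i)) (m * i)) \<le> m * (p - 1)"
        using degree_monom_le order.trans by blast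
    qed simp
    moreover have "m * (p - 1) < m * p" using m0 p by (intro mult_strict_left_mono) auto
    ultimately show False using minimal[OF nz2 e2] m by linarith
  qed
qed

lemma closed:
  assumes nopow: "\<And>a i. a \<noteq> 0 \<Longrightarrow> 0 < i \<Longrightarrow> i < n \<Longrightarrow> a ^ n * k ^ i \<in> Cx_field \<Longrightarrow> False"
    and z: "z \<in> gen_field \<phi> l" and alg: "algebraic_over \<phi> Cx_field z"
  shows "z \<in> \<phi> ` Cx_field"
proof -
  obtain P where P: "degree P < n" "z = ev P" using gen_rep[OF z] by blast
  have D: "Del P = 0" using key P alg by simp
  have c: "coeff P i = 0" if "0 < i" for i
  proof (cases "i < n")
    case True
    show ?thesis
    proof (rule ccontr)
      assume "coeff P i \<noteq> 0"
      moreover have "Dk (coeff P i ^ n * k ^ i) = 0"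
        using Dk_pow_rel[OF coeff_rel[OF D] that] .
      then have "coeff P i ^ n * k ^ i \<in> Cx_field" by (rule Dk_kernel)
      ultimately show False using nopow that True by blast
    qed
  next
    case False
    then show ?thesis using P by (simp add: coeff_eq_0)
  qed
  have "P = [:coeff P 0:]"
    by (rule poly_eqI) (auto simp: coeff_pCons c split: nat.split)
  moreover have "coeff P 0 \<in> Cx_field"
    using coeff_rel[OF D, of 0] by (intro Dk_kernel) simp
  ultimately show ?thesis using P by (metis ev_const image_eqI)
qed

end



lemma powi_Fract: "x \<noteq> 0 \<Longrightarrow> to_K x powi e = Fract (x ^ nat e) (x ^ nat (- e))"
proof (cases "e \<ge> 0")
  case True
  assume x: "x \<noteq> 0"
  define m where "m = nat e"
  have m: "e = int m" using True by (simp add: m_def)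
  have "to_K x ^ m = Fract (x ^ m) 1" by (induct m) (simp_all add: to_K_def One_fract_def[symmetric])
  then show ?thesis using m by simp
next
  case False
  assume x: "x \<noteq> 0"
  define m where "m = nat (- e)"
  have m: "e = - int m" using False by (simp add: m_def)
  have "to_K x ^ m = Fract (x ^ m) 1" by (induct m) (simp_all add: to_K_def One_fract_def[symmetric])
  then have "inverse (to_K x ^ m) = Fract 1 (x ^ m)" by simp
  then have "inverse (to_K x) ^ m = Fract 1 (x ^ m)" by (simp add: power_inverse)
  then show ?thesis using m False by (simp add: power_int_def)
qed

lemma prod_Fract: "(\<Prod>j\<in>A. Fract (f j) (g j)) = Fract (prod f A) (prod g A)"
  by (induct A rule: infinite_finite_induct) (simp_all add: fract_collapse)

lemma power_Fract: "Fract x y ^ m = Fract (x ^ m) (y ^ m)"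
  by (induct m) (simp_all add: fract_collapse)

lemma not_dvd_const:
  assumes "irreducible (Q::Cxy)" "Q \<notin> Cx_poly" "x \<noteq> 0" "degree x = 0"
  shows "\<not> Q dvd x"
proof
  assume "Q dvd x"
  then have "degree Q \<le> degree x" using assms(3) by (rule dvd_imp_degree_le)
  then have "degree Q = 0" using assms(4) by simp
  then obtain a where "Q = [:a:]" by (rule degree_eq_zeroE)
  then show False using assms(2) unfolding Cx_poly_def by blast
qed


lemma mult_q_prod:
  fixes q :: "nat \<Rightarrow> Cxy"
  assumes q_irr: "\<And>i. i < r \<Longrightarrow> irreducible (q i)"
    and q_coprime: "\<And>i j. i < r \<Longrightarrow> j < r \<Longrightarrow> i \<noteq> j \<Longrightarrow> coprime (q i) (q j)"
    and j: "j < r"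
  shows "multiplicity (q j) (\<Prod>l<r. q l ^ t l) = t j"
proof -
  have pj: "prime_elem (q j)" using q_irr[OF j] by (simp add: prime_elem_iff_irreducible)
  have nz: "q l \<noteq> 0" if "l < r" for l using q_irr[OF that] by auto
  have "multiplicity (q j) (\<Prod>l<r. q l ^ t l) = (\<Sum>l<r. multiplicity (q j) (q l ^ t l))"
    using nz by (intro prime_elem_multiplicity_prod_distrib[OF pj]) auto
  also have "\<dots> = (\<Sum>l<r. if l = j then t l else 0)"
  proof (rule sum.cong)
    fix l assume l: "l \<in> {..<r}"
    have m: "multiplicity (q j) (q l ^ t l) = t l * multiplicity (q j) (q l)"
      using nz l by (intro prime_elem_multiplicity_power_distrib[OF pj]) auto
    show "multiplicity (q j) (q l ^ t l) = (if l = j then t l else 0)"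
    proof (cases "l = j")
      case True
      have "\<not> is_unit (q j)" using q_irr[OF j] by (simp add: irreducible_def)
      then have "multiplicity (q j) (q j) = 1" using nz j by (intro multiplicity_self) auto
      then show ?thesis using m True by simp
    next
      case False
      have "\<not> q j dvd q l"
      proof
        assume "q j dvd q l"
        moreover have "coprime (q j) (q l)" using q_coprime[OF j, of l] l False by auto
        ultimately have "is_unit (q j)" by (intro coprime_common_divisor[of "q j" "q l"]) auto
        then show False using q_irr[OF j] by (simp add: irreducible_def)
      qed
      then have "multiplicity (q j) (q l) = 0" by (rule not_dvd_imp_multiplicity_0)
      then show ?thesis using m False by simp
    qed
  qed simp
  also have "\<dots> = t j" using j by simp
  finally show ?thesis .
qed




lemma exponent_dvd:
  fixes k :: K and r :: nat and q :: "nat \<Rightarrow> Cxy" and e :: "nat \<Rightarrow> int" and c :: complex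
    and a :: K and n i :: nat
  assumes q_irr: "\<And>i. i < r \<Longrightarrow> irreducible (q i)"
    and q_coprime: "\<And>i j. i < r \<Longrightarrow> j < r \<Longrightarrow> i \<noteq> j \<Longrightarrow> coprime (q i) (q j)"
    and c_nz: "c \<noteq> 0"
    and k_fact: "k = to_K [:[:c:]:] * (\<Prod>i<r. to_K (q i) powi e i)"
    and no_Cx: "\<And>i. i < r \<Longrightarrow> q i \<notin> Cx_poly"
    and a: "a \<noteq> 0" and hf: "a ^ n * k ^ i \<in> Cx_field"
    and j: "j < r"
  shows "int n dvd int i * e j"
proof -
  have qnz: "q l \<noteq> 0" if "l < r" for l using q_irr[OF that] by auto
  have pj: "prime_elem (q j)" using q_irr[OF j] by (simp add: prime_elem_iff_irreducible)
  obtain A B where aAB: "a = Fract A B" "B \<noteq> 0" "A \<noteq> 0" using a by (cases a rule: Fract_cases_nonzero) auto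
  define C0 :: Cxy where "C0 = [:[:c:]:]"
  define N where "N = (\<Prod>l<r. q l ^ nat (e l))"
  define Dn where "Dn = (\<Prod>l<r. q l ^ nat (- e l))"
  define Kn where "Kn = C0 * N"
  have C0: "C0 \<noteq> 0" "degree C0 = 0" using c_nz by (simp_all add: C0_def)
  have N0: "N \<noteq> 0" using qnz by (simp add: N_def)
  have D0: "Dn \<noteq> 0" using qnz by (simp add: Dn_def)
  have Kn0: "Kn \<noteq> 0" using C0 N0 by (simp add: Kn_def)
  have "(\<Prod>l<r. to_K (q l) powi e l) = (\<Prod>l<r. Fract (q l ^ nat (e l)) (q l ^ nat (- e l)))"
    using qnz by (intro prod.cong) (simp_all add: powi_Fract)
  also have "\<dots> = Fract N Dn" by (simp add: prod_Fract N_def Dn_def)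
  finally have kK: "k = Fract Kn Dn" using k_fact by (simp add: Kn_def C0_def to_K_def)
  obtain \<alpha> \<beta> where f: "a ^ n * k ^ i = to_K [:\<alpha>:] / to_K [:\<beta>:]" "\<beta> \<noteq> 0"
    using hf by (auto simp: Cx_field_def)
  have "Fract (A ^ n * Kn ^ i) (B ^ n * Dn ^ i) = Fract [:\<alpha>:] [:\<beta>:]"
  proof -
    have "a ^ n * k ^ i = Fract (A ^ n * Kn ^ i) (B ^ n * Dn ^ i)"
      using aAB kK by (simp add: power_Fract)
    moreover have "Fract [:\<alpha>:] [:\<beta>:] = to_K [:\<alpha>:] / to_K [:\<beta>:]"
      using f(2) by (simp add: Fract_to_K)
    ultimately show ?thesis using f(1) by simp
  qed
  then have eq: "A ^ n * Kn ^ i * [:\<beta>:] = [:\<alpha>:] * (B ^ n * Dn ^ i)"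
    using aAB D0 f by (simp add: eq_fract)
  have "\<alpha> \<noteq> 0"
  proof
    assume "\<alpha> = 0"
    then have "A ^ n * Kn ^ i * [:\<beta>:] = 0" using eq by simp
    then show False using aAB Kn0 f by simp
  qed
  have nd: "\<not> q j dvd [:x:]" if "x \<noteq> 0" for x
    using not_dvd_const[OF q_irr[OF j] no_Cx[OF j], of "[:x:]"] that by simp
  have m0: "multiplicity (q j) [:x:] = 0" if "x \<noteq> 0" for x
    using nd[OF that] by (rule not_dvd_imp_multiplicity_0)
  have mC0: "multiplicity (q j) C0 = 0" using m0 c_nz by (simp add: C0_def)
  have mN: "multiplicity (q j) N = nat (e j)"
    unfolding N_def by (rule mult_q_prod[OF q_irr q_coprime j])
  have mD: "multiplicity (q j) Dn = nat (- e j)"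
    unfolding Dn_def by (rule mult_q_prod[OF q_irr q_coprime j])
  have mKn: "multiplicity (q j) Kn = nat (e j)"
    using mC0 mN C0 N0 by (simp add: Kn_def prime_elem_multiplicity_mult_distrib[OF pj])
  have "multiplicity (q j) (A ^ n * Kn ^ i * [:\<beta>:]) = n * multiplicity (q j) A + i * nat (e j)"
    using aAB Kn0 f mKn m0[OF f(2)]
    by (simp del: mult_pCons_right mult_pCons_left add: prime_elem_multiplicity_mult_distrib[OF pj] prime_elem_multiplicity_power_distrib[OF pj])
  moreover have "multiplicity (q j) ([:\<alpha>:] * (B ^ n * Dn ^ i)) = n * multiplicity (q j) B + i * nat (- e j)"
    using aAB D0 \<open>\<alpha> \<noteq> 0\<close> mD m0[OF \<open>\<alpha> \<noteq> 0\<close>]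
    by (simp del: mult_pCons_right mult_pCons_left add: prime_elem_multiplicity_mult_distrib[OF pj] prime_elem_multiplicity_power_distrib[OF pj])
  ultimately have "n * multiplicity (q j) A + i * nat (e j) = n * multiplicity (q j) B + i * nat (- e j)"
    using eq by (simp del: mult_pCons_right mult_pCons_left)
  then have "int n * multiplicity (q j) A + int i * int (nat (e j)) = int n * multiplicity (q j) B + int i * int (nat (- e j))"
    by (metis of_nat_add of_nat_mult)
  then have "int i * e j = int n * (int (multiplicity (q j) B) - int (multiplicity (q j) A))"
    by (cases "e j \<ge> 0") (simp_all add: algebra_simps)
  then show ?thesis by simp
qed


lemma complex_root: assumes "(c::complex) \<noteq> 0" "0 < p" shows "\<exists>c'. c' ^ p = c"
proof -
  let ?r = "root p (norm c) * cis (Arg c / p)"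
  have "1 \<in> {z::complex. z ^ p = 1}" by simp
  then have "?r * 1 \<in> (\<lambda>z. ?r * z) ` {z. z ^ p = 1}" by (rule imageI)
  also have "\<dots> = {z. z ^ p = c}"
    using bij_betw_imp_surj_on[OF bij_betw_nth_root_unity[OF assms]] by simp
  finally show ?thesis by blast
qed

lemma to_K_power: "to_K x ^ m = to_K (x ^ m)"
  by (simp add: to_K_def power_Fract)

lemma k_power:
  fixes k :: K and r :: nat and q :: "nat \<Rightarrow> Cxy" and e :: "nat \<Rightarrow> int" and c :: complex
    and n i :: nat
  assumes c_nz: "c \<noteq> 0"
    and k_fact: "k = to_K [:[:c:]:] * (\<Prod>i<r. to_K (q i) powi e i)"
    and dv: "\<And>j. j < r \<Longrightarrow> int n dvd int i * e j"
    and i: "0 < i" "i < n"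
  shows "\<exists>g p. 1 < p \<and> p dvd n \<and> k = g ^ p"
proof -
  define d where "d = gcd n i"
  define p where "p = n div d"
  define i' where "i' = i div d"
  have d0: "d > 0" using i by (simp add: d_def)
  have np: "n = p * d" by (simp add: p_def d_def)
  have ip: "i = i' * d" by (simp add: i'_def d_def)
  have cop: "coprime p i'" unfolding p_def i'_def d_def using i by (intro div_gcd_coprime) auto
  have "d \<le> i" using i by (simp add: d_def)
  have p1: "1 < p"
  proof (rule ccontr)
    assume "\<not> 1 < p"
    then have "p = 0 \<or> p = 1" by auto
    then show False using np i \<open>d \<le> i\<close> by auto
  qed
  have pdn: "p dvd n" using np by simp
  have pe: "int p dvd e j" if "j < r" for j
  proof -
    have "int p * int d dvd int i' * e j * int d" using dv[OF that] unfolding np ip by (simp add: ac_simps)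
    then have "int p dvd int i' * e j" using d0 by simp
    then show ?thesis using cop by (simp add: coprime_dvd_mult_right_iff)
  qed
  have "0 < p" using p1 by simp
  then obtain c' where c': "c' ^ p = c" using complex_root[OF c_nz] by blast
  define g where "g = to_K [:[:c':]:] * (\<Prod>l<r. to_K (q l) powi (e l div int p))"
  have "g ^ p = to_K [:[:c':]:] ^ p * (\<Prod>l<r. (to_K (q l) powi (e l div int p)) ^ p)"
    by (simp add: g_def power_mult_distrib prod_power_distrib)
  also have "(\<Prod>l<r. (to_K (q l) powi (e l div int p)) ^ p) = (\<Prod>l<r. to_K (q l) powi e l)"
  proof (rule prod.cong)
    fix l assume "l \<in> {..<r}"
    then have "e l div int p * int p = e l" using pe by simp
    then show "(to_K (q l) powi (e l div int p)) ^ p = to_K (q l) powi e l"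
      by (metis power_int_mult power_int_of_nat)
  qed simp
  also have "to_K [:[:c':]:] ^ p = to_K [:[:c:]:]" by (simp add: to_K_power poly_const_pow c')
  finally have "k = g ^ p" using k_fact by simp
  then show ?thesis using p1 pdn by blast
qed


theorem mainTheorem9:
  fixes \<phi> :: "K \<Rightarrow> 'L::field" and l :: 'L and n :: nat and k :: K
    and r :: nat and q :: "nat \<Rightarrow> Cxy" and e :: "nat \<Rightarrow> int" and c :: complex
  assumes hom: "is_field_hom \<phi>"
    and k_nz: "k \<noteq> 0"
    and l_root: "l ^ n = \<phi> k"
    and deg: "ext_degree_eq \<phi> l n"
    and q_irr: "\<And>i. i < r \<Longrightarrow> irreducible (q i)"
    and q_coprime: "\<And>i j. i < r \<Longrightarrow> j < r \<Longrightarrow> i \<noteq> j \<Longrightarrow> coprime (q i) (q j)"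
    and e_nz: "\<And>i. i < r \<Longrightarrow> e i \<noteq> 0"
    and c_nz: "c \<noteq> 0"
    and k_fact: "k = to_K [:[:c:]:] * (\<Prod>i<r. to_K (q i) powi e i)"
    and no_Cx: "\<And>i. i < r \<Longrightarrow> q i \<notin> Cx_poly"
  shows "\<forall>z \<in> gen_field \<phi> l. algebraic_over \<phi> Cx_field z \<longrightarrow> z \<in> \<phi> ` Cx_field"
proof -
  interpret S \<phi> l n k using hom k_nz l_root deg by (unfold_locales) auto
  show ?thesis
  proof (intro ballI impI)
    fix z assume z: "z \<in> gen_field \<phi> l" and alg: "algebraic_over \<phi> Cx_field z"
    show "z \<in> \<phi> ` Cx_field"
    proof (rule closed[OF _ z alg])
      fix a i assume a: "a \<noteq> 0" "0 < i" "i < n" "a ^ n * k ^ i \<in> Cx_field"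
      have dv: "\<And>j. j < r \<Longrightarrow> int n dvd int i * e j"
        using exponent_dvd[OF q_irr q_coprime c_nz k_fact no_Cx a(1) a(4)] by blast
      obtain g p where "1 < p" "p dvd n" "k = g ^ p"
        using k_power[OF c_nz k_fact dv a(2) a(3)] by blast
      then show False by (rule no_power)
    qed
  qed
qed

end
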